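(* If $T$ is a subcubic tree, then $\gamma_e(T)=\gamma_{e,f}^*(T)$ if and only if $T$ is $K_{1,3}$.
   Context: All graphs are finite, simple and undirected; subcubic means maximum degree at most $3$; $K_{1,3}$ is the star with three leaves. For a graph $G$ and $D\subseteq V(G)$, and vertices $u,v$, let $\mathrm{dist}_{(G,D)}(u,v)$ be the minimum number of edges of a path $P$ in $G$ between $u$ and $v$ such that $D$ contains exactly one endvertex of $P$ and no internal vertex of $P$ ($\infty$ if no such path exists; in particular $\mathrm{dist}_{(G,D)}(u,u)=0$ for $u\in D$). Let $w_{(G,D)}(u)=\sum_{v\in D}\left(\frac12\right)^{\mathrm{dist}_{(G,D)}(u,v)-1}$ with $\left(\frac12\right)^\infty=0$. $D$ is an exponential dominating set if $w_{(G,D)}(u)\ge 1$ for every $u\in V(G)$, and $\gamma_e(G)$ is the minimum size of an exponential dominating set. The fractional porous exponential domination number $\gamma_{e,f}^*(G)$ is the optimum value of the linear program: minimize $\sum_{u\in V(G)}x(u)$ subject to $\sum_{u\in V(G)}\left(\frac12\right)^{\mathrm{dist}_G(u,v)-1}x(u)\ge 1$ for every $v\in V(G)$ and $x\ge 0$, where $\mathrm{dist}_G$ is the usual distance. *)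

theory Defs
  imports Complex_Main "HOL-Library.Extended_Nat"
begin

definition graph :: "'a set \<Rightarrow> ('a \<Rightarrow> 'a \<Rightarrow> bool) \<Rightarrow> bool" where
  "graph V E \<longleftrightarrow> finite V \<and> (\<forall>u v. E u v \<longrightarrow> u \<in> V \<and> v \<in> V)
     \<and> (\<forall>u v. E u v \<longrightarrow> E v u) \<and> (\<forall>u. \<not> E u u)"

definition is_path :: "'a set \<Rightarrow> ('a \<Rightarrow> 'a \<Rightarrow> bool) \<Rightarrow> 'a list \<Rightarrow> bool" where
  "is_path V E p \<longleftrightarrow> p \<noteq> [] \<and> distinct p \<and> set p \<subseteq> V
     \<and> (\<forall>i. Suc i < length p \<longrightarrow> E (p ! i) (p ! Suc i))"

definition connected_graph :: "'a set \<Rightarrow> ('a \<Rightarrow> 'a \<Rightarrow> bool) \<Rightarrow> bool" where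
  "connected_graph V E \<longleftrightarrow> V \<noteq> {} \<and>
     (\<forall>u\<in>V. \<forall>v\<in>V. \<exists>p. is_path V E p \<and> hd p = u \<and> last p = v)"

definition is_cycle :: "'a set \<Rightarrow> ('a \<Rightarrow> 'a \<Rightarrow> bool) \<Rightarrow> 'a list \<Rightarrow> bool" where
  "is_cycle V E c \<longleftrightarrow> is_path V E c \<and> length c \<ge> 3 \<and> E (last c) (hd c)"

definition tree :: "'a set \<Rightarrow> ('a \<Rightarrow> 'a \<Rightarrow> bool) \<Rightarrow> bool" where
  "tree V E \<longleftrightarrow> graph V E \<and> connected_graph V E \<and> (\<nexists>c. is_cycle V E c)"

definition subcubic :: "'a set \<Rightarrow> ('a \<Rightarrow> 'a \<Rightarrow> bool) \<Rightarrow> bool" where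
  "subcubic V E \<longleftrightarrow> (\<forall>u\<in>V. card {v\<in>V. E u v} \<le> 3)"

definition K13_V :: "nat set" where "K13_V = {0,1,2,3}"
definition K13_E :: "nat \<Rightarrow> nat \<Rightarrow> bool" where
  "K13_E a b \<longleftrightarrow> (a = 0 \<and> b \<in> {1,2,3}) \<or> (b = 0 \<and> a \<in> {1,2,3})"

definition graph_iso :: "'a set \<Rightarrow> ('a \<Rightarrow> 'a \<Rightarrow> bool) \<Rightarrow> 'b set \<Rightarrow> ('b \<Rightarrow> 'b \<Rightarrow> bool) \<Rightarrow> bool" where
  "graph_iso V E W F \<longleftrightarrow> (\<exists>f. bij_betw f V W \<and> (\<forall>u\<in>V. \<forall>v\<in>V. E u v \<longleftrightarrow> F (f u) (f v)))"

text \<open>Usual distance (number of edges of a shortest path), \<infinity> if none.\<close>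
definition gdist :: "'a set \<Rightarrow> ('a \<Rightarrow> 'a \<Rightarrow> bool) \<Rightarrow> 'a \<Rightarrow> 'a \<Rightarrow> enat" where
  "gdist V E u v = Inf {enat (length p - 1) | p. is_path V E p \<and> hd p = u \<and> last p = v}"

definition Ddist :: "'a set \<Rightarrow> ('a \<Rightarrow> 'a \<Rightarrow> bool) \<Rightarrow> 'a set \<Rightarrow> 'a \<Rightarrow> 'a \<Rightarrow> enat" where
  "Ddist V E D u v = Inf {enat (length p - 1) | p. is_path V E p \<and> hd p = u \<and> last p = v
      \<and> card ({hd p, last p} \<inter> D) = 1 \<and> set (butlast (tl p)) \<inter> D = {}}"

definition half_pow :: "enat \<Rightarrow> real" where
  "half_pow d = (case d of enat n \<Rightarrow> (1/2::real) powr (real n - 1) | \<infinity> \<Rightarrow> 0)"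

definition exp_weight :: "'a set \<Rightarrow> ('a \<Rightarrow> 'a \<Rightarrow> bool) \<Rightarrow> 'a set \<Rightarrow> 'a \<Rightarrow> real" where
  "exp_weight V E D u = (\<Sum>v\<in>D. half_pow (Ddist V E D u v))"

definition exp_dominating :: "'a set \<Rightarrow> ('a \<Rightarrow> 'a \<Rightarrow> bool) \<Rightarrow> 'a set \<Rightarrow> bool" where
  "exp_dominating V E D \<longleftrightarrow> D \<subseteq> V \<and> (\<forall>u\<in>V. exp_weight V E D u \<ge> 1)"

definition gamma_e :: "'a set \<Rightarrow> ('a \<Rightarrow> 'a \<Rightarrow> bool) \<Rightarrow> nat" where
  "gamma_e V E = (LEAST k. \<exists>D. exp_dominating V E D \<and> card D = k)"

definition lp_feasible :: "'a set \<Rightarrow> ('a \<Rightarrow> 'a \<Rightarrow> bool) \<Rightarrow> ('a \<Rightarrow> real) \<Rightarrow> bool" where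
  "lp_feasible V E x \<longleftrightarrow> (\<forall>u\<in>V. x u \<ge> 0) \<and>
     (\<forall>v\<in>V. (\<Sum>u\<in>V. half_pow (gdist V E u v) * x u) \<ge> 1)"

definition gamma_ef_star :: "'a set \<Rightarrow> ('a \<Rightarrow> 'a \<Rightarrow> bool) \<Rightarrow> real" where
  "gamma_ef_star V E = Inf {\<Sum>u\<in>V. x u | x. lp_feasible V E x}"

end

theory Submission
  imports Defs
begin

lemma is_path_alt: "is_path V E p \<longleftrightarrow> p \<noteq> [] \<and> distinct p \<and> set p \<subseteq> V \<and> successively E p"
  by (auto simp: is_path_def successively_conv_nth)

definition walk :: "'a set \<Rightarrow> ('a \<Rightarrow> 'a \<Rightarrow> bool) \<Rightarrow> 'a list \<Rightarrow> bool" where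
  "walk V E p \<longleftrightarrow> p \<noteq> [] \<and> set p \<subseteq> V \<and> successively E p"

lemma path_walk: "is_path V E p \<Longrightarrow> walk V E p"
  by (simp add: is_path_alt walk_def)

lemma walk_to_path:
  assumes "walk V E p"
  shows "\<exists>q. is_path V E q \<and> hd q = hd p \<and> last q = last p \<and> set q \<subseteq> set p \<and> length q \<le> length p"
  using assms
proof (induction "length p" arbitrary: p rule: less_induct)
  case less
  show ?case
  proof (cases "distinct p")
    case True thus ?thesis using less.prems by (auto simp: walk_def is_path_alt)
  next
    case False
    then obtain xs ys zs y where p: "p = xs @ [y] @ ys @ [y] @ zs" using not_distinct_decomp by blast
    let ?p = "xs @ [y] @ zs"
    have w: "walk V E ?p" using less.prems unfolding walk_def p
      by (auto simp: successively_append_iff successively_Cons)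
    have "length ?p < length p" by (simp add: p)
    then obtain q where q: "is_path V E q \<and> hd q = hd ?p \<and> last q = last ?p \<and> set q \<subseteq> set ?p \<and> length q \<le> length ?p"
      using less.hyps w by blast
    have "hd ?p = hd p" "last ?p = last p" "set ?p \<subseteq> set p" "length ?p \<le> length p"
      by (auto simp: p hd_append last_append)
    thus ?thesis using q by (metis order.trans)
  qed
qed

lemma walk_append:
  "walk V E p \<Longrightarrow> walk V E q \<Longrightarrow> last p = hd q \<Longrightarrow> walk V E (p @ tl q)"
  unfolding walk_def
  by (cases q) (auto simp: successively_append_iff successively_Cons)

lemma gdist_le_walk:
  assumes "walk V E p" "hd p = a" "last p = b"
  shows "gdist V E a b \<le> enat (length p - 1)"
proof -
  obtain q where q: "is_path V E q" "hd q = a" "last q = b" "length q \<le> length p"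
    using walk_to_path[OF assms(1)] assms by metis
  have "gdist V E a b \<le> enat (length q - 1)"
    unfolding gdist_def using q by (auto intro!: Inf_lower)
  also have "\<dots> \<le> enat (length p - 1)" using q by simp
  finally show ?thesis .
qed

lemma gdist_attained:
  assumes "gdist V E a b = enat k"
  shows "\<exists>p. is_path V E p \<and> hd p = a \<and> last p = b \<and> length p = Suc k"
proof -
  let ?S = "{enat (length p - 1) | p. is_path V E p \<and> hd p = a \<and> last p = b}"
  have ne: "?S \<noteq> {}"
  proof
    assume "?S = {}"
    hence "gdist V E a b = \<infinity>" unfolding gdist_def by (metis Inf_empty top_enat_def)
    thus False using assms by simp
  qed
  have "Inf ?S \<in> ?S" using ne unfolding Inf_enat_def by (auto intro: LeastI)
  then obtain p where p: "is_path V E p" "hd p = a" "last p = b" "enat (length p - 1) = enat k"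
    using assms unfolding gdist_def by auto
  moreover have "p \<noteq> []" using p(1) by (simp add: is_path_def)
  ultimately show ?thesis by (intro exI[of _ p]) auto
qed

lemma graph_sym: "graph V E \<Longrightarrow> E a b \<Longrightarrow> E b a" by (simp add: graph_def)

lemma gdist_sym_le:
  assumes "graph V E" shows "gdist V E b a \<le> gdist V E a b"
  unfolding gdist_def
proof (rule Inf_greatest)
  fix x assume "x \<in> {enat (length p - 1) | p. is_path V E p \<and> hd p = a \<and> last p = b}"
  then obtain p where p: "is_path V E p" "hd p = a" "last p = b" "x = enat (length p - 1)" by auto
  have "is_path V E (rev p)" using p(1) assms
    by (auto simp: is_path_alt graph_def intro: successively_mono)
  moreover have "hd (rev p) = b" "last (rev p) = a" using p by (auto simp: hd_rev last_rev is_path_def)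
  ultimately have "x \<in> {enat (length p - 1) | p. is_path V E p \<and> hd p = b \<and> last p = a}"
    using p(4) by (intro CollectI exI[of _ "rev p"]) auto
  thus "Inf {enat (length p - 1) | p. is_path V E p \<and> hd p = b \<and> last p = a} \<le> x"
    by (rule Inf_lower)
qed

lemma gdist_sym: "graph V E \<Longrightarrow> gdist V E a b = gdist V E b a"
  by (simp add: antisym gdist_sym_le)

lemma gdist_refl: "a \<in> V \<Longrightarrow> gdist V E a a = 0"
proof -
  assume "a \<in> V"
  hence "gdist V E a a \<le> enat 0" using gdist_le_walk[of V E "[a]" a a] by (simp add: walk_def)
  thus ?thesis by (simp add: zero_enat_def[symmetric])
qed

lemma gdist_adj: "graph V E \<Longrightarrow> E a b \<Longrightarrow> gdist V E a b \<le> 1"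
  using gdist_le_walk[of V E "[a,b]" a b] by (auto simp: walk_def graph_def one_enat_def)

lemma gdist_ge1: assumes "a \<noteq> b" shows "1 \<le> gdist V E a b"
proof (rule ccontr)
  assume "\<not> 1 \<le> gdist V E a b"
  hence "gdist V E a b = enat 0" by (cases "gdist V E a b") (auto simp: one_enat_def)
  then obtain p where "is_path V E p" "hd p = a" "last p = b" "length p = 1" using gdist_attained by fastforce
  thus False using assms by (cases p) auto
qed

lemma gdist_ge2: assumes "a \<noteq> b" "\<not> E a b" shows "2 \<le> gdist V E a b"
proof (rule ccontr)
  assume "\<not> 2 \<le> gdist V E a b"
  then obtain k where k: "gdist V E a b = enat k" "k < 2" by (cases "gdist V E a b") (auto simp: numeral_eq_enat)
  then obtain p where p: "is_path V E p" "hd p = a" "last p = b" "length p = Suc k" using gdist_attained by fastforce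
  show False
  proof (cases "k = 0")
    case True thus False using p assms by (cases p) auto
  next
    case False
    hence "k = 1" using k by simp
    then obtain x y where "p = [x,y]" using p(4) by (cases p; cases "tl p") auto
    thus False using p assms by (auto simp: is_path_alt)
  qed
qed

lemma gdist_step:
  assumes "graph V E" "E z u"
  shows "gdist V E z v \<le> gdist V E u v + 1"
proof (cases "gdist V E u v")
  case (enat k)
  then obtain p where p: "is_path V E p" "hd p = u" "last p = v" "length p = Suc k" using gdist_attained by fastforce
  have "walk V E (z # p)" using p assms by (cases p) (auto simp: is_path_alt walk_def graph_def)
  hence "gdist V E z v \<le> enat (length (z#p) - 1)" using gdist_le_walk p by (metis last_ConsR list.sel(1) list.size(3) nat.distinct(1))
  thus ?thesis using p enat by (simp add: one_enat_def)
qed simp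

lemma gdist_le_card:
  assumes "finite V" "gdist V E a b \<noteq> \<infinity>"
  shows "gdist V E a b \<le> enat (card V)"
proof -
  obtain k where k: "gdist V E a b = enat k" using assms by auto
  then obtain p where p: "is_path V E p" "length p = Suc k" using gdist_attained[OF k] by blast
  have "length p = card (set p)" using p by (simp add: is_path_def distinct_card)
  also have "\<dots> \<le> card V" using p assms by (intro card_mono) (auto simp: is_path_def)
  finally show ?thesis using k p by simp
qed

lemma gdist_path_le: "is_path V E p \<Longrightarrow> hd p = a \<Longrightarrow> last p = b \<Longrightarrow> gdist V E a b \<le> enat (length p - 1)"
  unfolding gdist_def by (rule Inf_lower) blast

lemma gdist_finite: "connected_graph V E \<Longrightarrow> a \<in> V \<Longrightarrow> b \<in> V \<Longrightarrow> gdist V E a b \<noteq> \<infinity>"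
proof -
  assume "connected_graph V E" "a \<in> V" "b \<in> V"
  then obtain p where "is_path V E p" "hd p = a" "last p = b" unfolding connected_graph_def by blast
  hence "gdist V E a b \<le> enat (length p - 1)" by (rule gdist_path_le)
  thus ?thesis by (cases "gdist V E a b") auto
qed

lemma half_pow_enat: "half_pow (enat k) = 2 / 2 ^ k"
  by (simp add: half_pow_def powr_diff powr_realpow power_divide)

lemma half_pow_inf[simp]: "half_pow \<infinity> = 0" by (simp add: half_pow_def)

lemma half_pow_nonneg: "0 \<le> half_pow d" by (cases d) (auto simp: half_pow_enat)

lemma half_pow_le2: "half_pow d \<le> 2"
proof (cases d)
  case (enat k)
  have "(1::real) \<le> 2 ^ k" by simp
  hence "2 / 2 ^ k \<le> (2::real) / 1" by (intro divide_left_mono) auto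
  thus ?thesis using enat by (simp add: half_pow_enat)
qed simp

lemma half_pow_anti: assumes "a \<le> b" shows "half_pow b \<le> half_pow a"
proof (cases b)
  case (enat m)
  then obtain k where a: "a = enat k" "k \<le> m" using assms by (cases a) auto
  have "(2::real) ^ k \<le> 2 ^ m" using a(2) by (intro power_increasing) auto
  thus ?thesis using a enat by (simp add: half_pow_enat frac_le)
qed (simp add: half_pow_nonneg)

lemma half_pow_Suc: "half_pow (enat (Suc k)) = half_pow (enat k) / 2"
  by (simp add: half_pow_enat)

lemma Ddist_ge: "gdist V E a b \<le> Ddist V E D a b"
  unfolding gdist_def Ddist_def by (rule Inf_superset_mono) blast

lemma Ddist_path_le: "is_path V E p \<Longrightarrow> hd p = a \<Longrightarrow> last p = b \<Longrightarrow> card ({hd p, last p} \<inter> D) = 1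
  \<Longrightarrow> set (butlast (tl p)) \<inter> D = {} \<Longrightarrow> Ddist V E D a b \<le> enat (length p - 1)"
  unfolding Ddist_def by (rule Inf_lower) blast

lemma Ddist_attained:
  assumes "Ddist V E D a b \<noteq> \<infinity>"
  shows "\<exists>p. is_path V E p \<and> hd p = a \<and> last p = b \<and> card ({hd p, last p} \<inter> D) = 1
      \<and> set (butlast (tl p)) \<inter> D = {}"
proof -
  let ?S = "{enat (length p - 1) | p. is_path V E p \<and> hd p = a \<and> last p = b
      \<and> card ({hd p, last p} \<inter> D) = 1 \<and> set (butlast (tl p)) \<inter> D = {}}"
  have ne: "?S \<noteq> {}"
  proof
    assume "?S = {}"
    hence "Ddist V E D a b = \<infinity>" unfolding Ddist_def by (metis Inf_empty top_enat_def)
    thus False using assms by simp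
  qed
  thus ?thesis by blast
qed

lemma set_path_decomp: "x \<in> set p \<Longrightarrow> x = hd p \<or> x = last p \<or> x \<in> set (butlast (tl p))"
proof (cases p)
  case (Cons a q)
  assume x: "x \<in> set p"
  show ?thesis
  proof (cases "q = []")
    case False
    hence "set q = set (butlast q) \<union> {last q}" by (metis append_butlast_last_id set_append empty_set insert_is_Un set_simps(2) sup_commute)
    thus ?thesis using x Cons False by auto
  qed (use x Cons in auto)
qed simp

lemma no_avoid_walk:
  assumes "tree V E" "E u y" "E u z" "y \<noteq> z" "walk V E w" "hd w = z" "last w = y" "u \<notin> set w"
  shows False
proof -
  obtain q where q: "is_path V E q" "hd q = z" "last q = y" "set q \<subseteq> set w"
    using walk_to_path[OF assms(5)] assms(6,7) by metis
  have g: "graph V E" using assms(1) by (simp add: tree_def)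
  have uq: "u \<notin> set q" using q(4) assms(8) by blast
  have uV: "u \<in> V" using g assms(2) by (simp add: graph_def)
  have qne: "q \<noteq> []" using q(1) by (simp add: is_path_def)
  have "length q \<noteq> 1"
  proof
    assume "length q = 1"
    then obtain a where "q = [a]" by (cases q) auto
    thus False using q assms(4) by simp
  qed
  hence lq: "length q \<ge> 2" using qne by (cases q) (auto simp: Suc_le_eq)
  have "is_path V E (u # q)" using q(1) uq uV qne q(2) assms(3)
    by (auto simp: is_path_alt successively_Cons)
  moreover have "E (last (u # q)) (hd (u # q))" using qne q(3) assms(2) g by (simp add: graph_def)
  ultimately have "is_cycle V E (u # q)" using lq by (simp add: is_cycle_def)
  thus False using assms(1) by (simp add: tree_def)
qed

lemma S_ge_w:
  assumes "graph V E" "finite D"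
  shows "exp_weight V E D v \<le> (\<Sum>w\<in>D. half_pow (gdist V E w v))"
  unfolding exp_weight_def
proof (rule sum_mono)
  fix w assume "w \<in> D"
  have "gdist V E w v = gdist V E v w" using assms(1) by (rule gdist_sym)
  also have "\<dots> \<le> Ddist V E D v w" by (rule Ddist_ge)
  finally show "half_pow (Ddist V E D v w) \<le> half_pow (gdist V E w v)" by (rule half_pow_anti)
qed

lemma self_weight:
  assumes "finite D" "D \<subseteq> V" "v \<in> D"
  shows "2 \<le> exp_weight V E D v"
proof -
  have "Ddist V E D v v \<le> enat (length [v] - 1)"
    using assms by (intro Ddist_path_le) (auto simp: is_path_def)
  hence "half_pow (enat 0) \<le> half_pow (Ddist V E D v v)" by (intro half_pow_anti) simp
  also have "\<dots> \<le> exp_weight V E D v" unfolding exp_weight_def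
    using assms by (intro member_le_sum) (auto simp: half_pow_nonneg)
  finally show ?thesis by (simp add: half_pow_enat)
qed

lemma gamma_e_attained:
  assumes "finite V"
  shows "\<exists>D. exp_dominating V E D \<and> card D = gamma_e V E"
proof -
  have "exp_dominating V E V" unfolding exp_dominating_def
  proof (intro conjI ballI)
    fix u assume "u \<in> V"
    hence "2 \<le> exp_weight V E V u" using self_weight[OF assms] by blast
    thus "1 \<le> exp_weight V E V u" by simp
  qed simp
  hence "\<exists>k D. exp_dominating V E D \<and> card D = k" by blast
  thus ?thesis unfolding gamma_e_def by (rule LeastI_ex)
qed

lemma lp_le_sum:
  assumes "lp_feasible V E x"
  shows "gamma_ef_star V E \<le> (\<Sum>u\<in>V. x u)"
  unfolding gamma_ef_star_def
proof (rule cInf_lower)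
  show "(\<Sum>u\<in>V. x u) \<in> {\<Sum>u\<in>V. x u | x. lp_feasible V E x}" using assms by blast
  show "bdd_below {\<Sum>u\<in>V. x u | x. lp_feasible V E x}"
    by (rule bdd_belowI[of _ 0]) (auto simp: lp_feasible_def intro: sum_nonneg)
qed

lemma lp_ge:
  assumes "\<And>x. lp_feasible V E x \<Longrightarrow> c \<le> (\<Sum>u\<in>V. x u)" "lp_feasible V E x0"
  shows "c \<le> gamma_ef_star V E"
  unfolding gamma_ef_star_def
  by (rule cInf_greatest) (use assms in auto)

lemma lp_le_gamma:
  assumes "graph V E"
  shows "gamma_ef_star V E \<le> real (gamma_e V E)"
proof -
  have fin: "finite V" using assms by (simp add: graph_def)
  obtain D where D: "exp_dominating V E D" "card D = gamma_e V E" using gamma_e_attained[OF fin] by blast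
  have DV: "D \<subseteq> V" and finD: "finite D" using D fin by (auto simp: exp_dominating_def intro: finite_subset)
  let ?x = "\<lambda>u. if u \<in> D then 1 else (0::real)"
  have "lp_feasible V E ?x" unfolding lp_feasible_def
  proof (intro conjI ballI)
    fix v assume v: "v \<in> V"
    have "(\<Sum>u\<in>V. half_pow (gdist V E u v) * ?x u) = (\<Sum>u\<in>V. if u \<in> D then half_pow (gdist V E u v) else 0)"
      by (intro sum.cong) auto
    also have "\<dots> = (\<Sum>u\<in>{u\<in>V. u \<in> D}. half_pow (gdist V E u v))" using fin by (simp add: sum.inter_filter)
    also have "{u\<in>V. u \<in> D} = D" using DV by auto
    finally have eq: "(\<Sum>u\<in>V. half_pow (gdist V E u v) * ?x u) = (\<Sum>u\<in>D. half_pow (gdist V E u v))" .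
    have "1 \<le> exp_weight V E D v" using D v by (simp add: exp_dominating_def)
    also have "\<dots> \<le> (\<Sum>u\<in>D. half_pow (gdist V E u v))" by (rule S_ge_w[OF assms finD])
    finally show "1 \<le> (\<Sum>u\<in>V. half_pow (gdist V E u v) * ?x u)" using eq by simp
  qed auto
  hence "gamma_ef_star V E \<le> (\<Sum>u\<in>V. ?x u)" by (rule lp_le_sum)
  also have "(\<Sum>u\<in>V. ?x u) = real (card D)" using fin DV
    by (simp add: sum.If_cases Int_absorb1)
  finally show ?thesis using D by simp
qed

lemma walk_rev: "graph V E \<Longrightarrow> walk V E p \<Longrightarrow> walk V E (rev p)"
  by (auto simp: walk_def graph_def intro: successively_mono)

lemma hd_append_tl: "p \<noteq> [] \<Longrightarrow> hd (p @ tl q) = hd p" by simp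

lemma last_append_tl: "p \<noteq> [] \<Longrightarrow> q \<noteq> [] \<Longrightarrow> last p = hd q \<Longrightarrow> last (p @ tl q) = last q"
  by (cases q) auto

lemma set_append_tl: "set (p @ tl q) \<subseteq> set p \<union> set q"
  by (cases q) auto

lemma Ddist_blocked:
  assumes tree: "tree V E" and DV: "D \<subseteq> V"
    and u: "u \<in> D" and u': "u' \<in> D" "u \<noteq> u'"
    and z: "E u z" and wz: "walk V E (z # r0)" "last (z # r0) = u'" "u \<notin> set (z # r0)"
    and v: "v \<in> V" "v \<notin> D"
    and a: "gdist V E u v \<le> gdist V E z v"
  shows "Ddist V E D v u' = \<infinity>"
proof (rule ccontr)
  assume nf: "Ddist V E D v u' \<noteq> \<infinity>"
  obtain p where p: "is_path V E p" "hd p = v" "last p = u'" "card ({hd p, last p} \<inter> D) = 1"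
      "set (butlast (tl p)) \<inter> D = {}" using Ddist_attained[OF nf] by (elim exE conjE) (rule that)
  have g: "graph V E" and conn: "connected_graph V E" using tree by (auto simp: tree_def)
  have uV: "u \<in> V" using u DV by auto
  have up: "u \<notin> set p"
  proof
    assume "u \<in> set p"
    hence "u = hd p \<or> u = last p \<or> u \<in> set (butlast (tl p))" by (rule set_path_decomp)
    thus False using p u u' v by auto
  qed
  have pne: "p \<noteq> []" using p by (simp add: is_path_def)
  obtain k where k: "gdist V E v u = enat k" using gdist_finite[OF conn v(1) uV] by auto
  obtain r where r: "is_path V E r" "hd r = v" "last r = u" "length r = Suc k"
    using gdist_attained[OF k] by blast
  have "v \<noteq> u" using v u by auto
  have "r \<noteq> [v]"
  proof
    assume "r = [v]" thus False using r \<open>v \<noteq> u\<close> by simp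
  qed
  hence k1: "k \<ge> 1" using r by (cases r) (auto simp: Suc_le_eq)
  obtain b where rsplit: "r = b @ [u]" using r by (metis append_butlast_last_id is_path_def)
  define y where "y = last b"
  have bne: "b \<noteq> []" using r k1 rsplit by auto
  have ub: "u \<notin> set b" using r rsplit by (simp add: is_path_def)
  have "successively E (b @ [u])" using r rsplit by (simp add: is_path_alt)
  hence Eyu: "E y u" and sb: "successively E b" using bne by (simp_all add: successively_append_iff y_def)
  have "set b \<subseteq> V" using r rsplit by (auto simp: is_path_def)
  hence wb: "walk V E b" using sb bne by (simp add: walk_def)
  have hdb: "hd b = v" using r bne rsplit by simp
  have lb: "length b = Suc k - 1" using r rsplit by simp
  show False
  proof (cases "y = z")
    case True
    have "gdist V E v z \<le> enat (length b - 1)" using gdist_le_walk[OF wb hdb] True y_def by simp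
    also have "length b - 1 < k" using lb k1 by simp
    finally have "gdist V E z v < gdist V E u v" using gdist_sym[OF g] k by (metis enat_ord_simps(2) order_le_less_trans)
    thus False using a by simp
  next
    case False
    let ?W = "((z # r0) @ tl (rev p)) @ tl b"
    have w1: "walk V E ((z # r0) @ tl (rev p))"
      using walk_append[OF wz(1) walk_rev[OF g path_walk[OF p(1)]]] wz(2) p(3) pne by (simp add: hd_rev)
    have l1: "last ((z # r0) @ tl (rev p)) = v"
      using last_append_tl[of "z # r0" "rev p"] wz(2) p pne by (simp add: hd_rev last_rev)
    have w: "walk V E ?W" using walk_append[OF w1 wb] l1 hdb by simp
    have hW: "hd ?W = z" by simp
    have lW: "last ?W = y" using last_append_tl[of "(z # r0) @ tl (rev p)" b] l1 hdb y_def bne by simp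
    have "set ?W \<subseteq> set (z # r0) \<union> set p \<union> set b" using set_append_tl[of "(z # r0)" "rev p"]
      set_append_tl[of "(z # r0) @ tl (rev p)" b] by auto
    hence uW: "u \<notin> set ?W" using wz(3) up ub by blast
    have "E u y" using Eyu g by (simp add: graph_def)
    show False using no_avoid_walk[OF tree \<open>E u y\<close> z _ w hW lW uW] False by blast
  qed
qed

lemma main_case:
  assumes tree: "tree V E" and D: "exp_dominating V E D" "card D = gamma_e V E"
    and u: "u \<in> D" and u': "u' \<in> D" "u \<noteq> u'"
  shows "gamma_ef_star V E < real (gamma_e V E)"
proof -
  have g: "graph V E" and conn: "connected_graph V E" using tree by (auto simp: tree_def)
  have fin: "finite V" using g by (simp add: graph_def)
  have DV: "D \<subseteq> V" using D by (simp add: exp_dominating_def)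
  have finD: "finite D" using finite_subset[OF DV fin] .
  have uV: "u \<in> V" "u' \<in> V" using DV u u' by auto
  obtain q where q: "is_path V E q" "hd q = u" "last q = u'" using conn uV unfolding connected_graph_def by blast
  have "q \<noteq> []" using q by (simp add: is_path_def)
  then obtain t where qt: "q = u # t" using q(2) by (cases q) auto
  have "t \<noteq> []" using q(3) u'(2) qt by auto
  then obtain z r0 where tz: "t = z # r0" by (cases t) auto
  have Euz: "E u z" using q(1) qt tz by (simp add: is_path_alt)
  have wz: "walk V E (z # r0)" using q(1) qt tz by (auto simp: is_path_alt walk_def)
  have lz: "last (z # r0) = u'" using q(3) qt tz by simp
  have uz: "u \<notin> set (z # r0)" using q(1) qt tz by (simp add: is_path_def)
  have zV: "z \<in> V" using wz by (simp add: walk_def)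
  have zu: "z \<noteq> u" using uz by auto
  define n where "n = card V"
  have n1: "n \<ge> 1" using fin uV by (auto simp: n_def card_gt_0_iff Suc_le_eq)
  define \<epsilon> :: real where "\<epsilon> = 1 / 2^n"
  have epos: "0 < \<epsilon>" by (simp add: \<epsilon>_def)
  have "(2::real) ^ 1 \<le> 2 ^ n" using n1 by (intro power_increasing) auto
  hence ele: "\<epsilon> \<le> 1/2" by (simp add: \<epsilon>_def frac_le)
  define x where "x = (\<lambda>w. (if w \<in> D then 1 else 0) - (if w = u then \<epsilon> else 0) + (if w = z then \<epsilon>/2 else (0::real)))"
  have DD: "{w\<in>V. w \<in> D} = D" using DV by auto
  have sumx: "(\<Sum>w\<in>V. x w) = real (card D) - \<epsilon>/2"
  proof -
    have "(\<Sum>w\<in>V. x w) = (\<Sum>w\<in>V. if w \<in> D then 1 else 0) - (\<Sum>w\<in>V. if w = u then \<epsilon> else 0) + (\<Sum>w\<in>V. if w = z then \<epsilon>/2 else 0)"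
      unfolding x_def by (simp add: sum.distrib sum_subtractf)
    also have "(\<Sum>w\<in>V. if w \<in> D then (1::real) else 0) = (\<Sum>w\<in>{w\<in>V. w \<in> D}. 1)"
      using fin by (simp only: sum.inter_filter)
    also have "\<dots> = real (card D)" using DD by simp
    finally show ?thesis using fin uV zV by simp
  qed
  have feas: "lp_feasible V E x"
    unfolding lp_feasible_def
  proof (intro conjI ballI)
    fix w assume "w \<in> V" show "0 \<le> x w" using ele zu epos u by (auto simp: x_def)
  next
    fix v assume v: "v \<in> V"
    define h where "h = (\<lambda>w. half_pow (gdist V E w v))"
    have h0: "\<And>w. 0 \<le> h w" by (simp add: h_def half_pow_nonneg)
    have eq: "(\<Sum>w\<in>V. h w * x w) = (\<Sum>w\<in>D. h w) - \<epsilon> * h u + \<epsilon>/2 * h z"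
    proof -
      have "(\<Sum>w\<in>V. h w * x w) = (\<Sum>w\<in>V. (if w \<in> D then h w else 0) - (if w = u then \<epsilon> * h w else 0) + (if w = z then \<epsilon>/2 * h w else 0))"
        by (intro sum.cong) (auto simp: x_def algebra_simps)
      also have "\<dots> = (\<Sum>w\<in>V. if w \<in> D then h w else 0) - (\<Sum>w\<in>V. if w = u then \<epsilon> * h w else 0) + (\<Sum>w\<in>V. if w = z then \<epsilon>/2 * h w else 0)"
        by (simp add: sum.distrib sum_subtractf)
      also have "(\<Sum>w\<in>V. if w \<in> D then h w else 0) = (\<Sum>w\<in>{w\<in>V. w \<in> D}. h w)"
        using fin by (simp only: sum.inter_filter)
      also have "\<dots> = (\<Sum>w\<in>D. h w)" using DD by simp
      finally show ?thesis using fin uV zV by simp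
    qed
    have "1 \<le> exp_weight V E D v" using D v by (simp add: exp_dominating_def)
    hence S1: "1 \<le> (\<Sum>w\<in>D. h w)" using S_ge_w[OF g finD, of v] unfolding h_def by linarith
    obtain a where a: "gdist V E u v = enat a" using gdist_finite[OF conn uV(1) v] by auto
    obtain b where b: "gdist V E z v = enat b" using gdist_finite[OF conn zV v] by auto
    have "enat a \<le> enat b + 1" using gdist_step[OF g Euz, of v] a b by simp
    hence ab: "a \<le> Suc b" by (simp add: one_enat_def)
    have "1 \<le> (\<Sum>w\<in>D. h w) - \<epsilon> * h u + \<epsilon>/2 * h z"
    proof (cases "b < a")
      case True
      hence "a = Suc b" using ab by simp
      hence "h u = h z / 2" using a b by (simp add: h_def half_pow_Suc)
      hence "\<epsilon> * h u = \<epsilon>/2 * h z" by simp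
      thus ?thesis using S1 by linarith
    next
      case False
      hence guz: "gdist V E u v \<le> gdist V E z v" using a b by simp
      have hu2: "h u \<le> 2" by (simp add: h_def half_pow_le2)
      have key: "1 + 2 * \<epsilon> \<le> (\<Sum>w\<in>D. h w)"
      proof (cases "v \<in> D")
        case True
        have "gdist V E v v = enat 0" using gdist_refl[OF v] by (simp add: zero_enat_def)
        hence "h v = 2" by (simp add: h_def half_pow_enat)
        moreover have "h v \<le> (\<Sum>w\<in>D. h w)" using True finD h0 by (intro member_le_sum) auto
        ultimately show ?thesis using ele by simp
      next
        case False
        have blk: "Ddist V E D v u' = \<infinity>"
          using Ddist_blocked[OF tree DV u u' Euz wz lz uz v False guz] .
        have "exp_weight V E D v = half_pow (Ddist V E D v u') + (\<Sum>w\<in>D - {u'}. half_pow (Ddist V E D v w))"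
          unfolding exp_weight_def using finD u'(1) by (rule sum.remove)
        also have "\<dots> \<le> 0 + (\<Sum>w\<in>D - {u'}. h w)"
        proof -
          have "(\<Sum>w\<in>D - {u'}. half_pow (Ddist V E D v w)) \<le> (\<Sum>w\<in>D - {u'}. h w)"
          proof (rule sum_mono)
            fix w
            have "gdist V E w v = gdist V E v w" using g by (rule gdist_sym)
            also have "\<dots> \<le> Ddist V E D v w" by (rule Ddist_ge)
            finally show "half_pow (Ddist V E D v w) \<le> h w" unfolding h_def by (rule half_pow_anti)
          qed
          thus ?thesis using blk by simp
        qed
        also have "(\<Sum>w\<in>D - {u'}. h w) = (\<Sum>w\<in>D. h w) - h u'"
          using sum.remove[OF finD u'(1), of h] by simp
        finally have w1: "exp_weight V E D v \<le> (\<Sum>w\<in>D. h w) - h u'" by simp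
        have "1 \<le> exp_weight V E D v" using D v by (simp add: exp_dominating_def)
        moreover have "2 * \<epsilon> \<le> h u'"
        proof -
          have "gdist V E u' v \<le> enat n" unfolding n_def using gdist_le_card[OF fin gdist_finite[OF conn uV(2) v]] .
          hence "half_pow (enat n) \<le> h u'" unfolding h_def by (rule half_pow_anti)
          thus ?thesis by (simp add: half_pow_enat \<epsilon>_def)
        qed
        ultimately show ?thesis using w1 by simp
      qed
      have "\<epsilon> * h u \<le> \<epsilon> * 2" using hu2 epos by (intro mult_left_mono) auto
      moreover have "0 \<le> \<epsilon>/2 * h z" using epos h0 by simp
      ultimately show ?thesis using key by simp
    qed
    thus "1 \<le> (\<Sum>w\<in>V. half_pow (gdist V E w v) * x w)" using eq by (simp add: h_def)
  qed
  have "gamma_ef_star V E \<le> real (card D) - \<epsilon>/2" using lp_le_sum[OF feas] sumx by simp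
  thus ?thesis using epos D(2) by simp
qed

lemma hp_ge: "gdist V E w v \<le> enat k \<Longrightarrow> 2 / 2^k \<le> half_pow (gdist V E w v)"
  using half_pow_anti[of "gdist V E w v" "enat k"] by (simp add: half_pow_enat)

lemma hp_le: "enat k \<le> gdist V E w v \<Longrightarrow> half_pow (gdist V E w v) \<le> 2 / 2^k"
  using half_pow_anti[of "enat k" "gdist V E w v"] by (simp add: half_pow_enat)

lemma hp_refl: "w \<in> V \<Longrightarrow> half_pow (gdist V E w w) = 2"
  using gdist_refl[of w V E] by (simp add: zero_enat_def half_pow_enat)

lemma hp_adj: assumes "graph V E" "E a b" shows "1 \<le> half_pow (gdist V E a b)"
proof -
  have "gdist V E a b \<le> enat 1" using gdist_adj[OF assms] by (simp add: one_enat_def)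
  from hp_ge[OF this] show ?thesis by simp
qed

lemma small1:
  assumes "V = {u}"
  shows "gamma_ef_star V E < 1"
proof -
  have "lp_feasible V E (\<lambda>_. 1/2)" unfolding lp_feasible_def
    using hp_refl[of u V E] assms by simp
  hence "gamma_ef_star V E \<le> (\<Sum>w\<in>V. 1/2)" by (rule lp_le_sum)
  thus ?thesis using assms by simp
qed

lemma small2:
  assumes g: "graph V E" and V: "V = {u,a}" "u \<noteq> a" and e: "E u a"
  shows "gamma_ef_star V E < 1"
proof -
  have e': "E a u" using g e by (simp add: graph_def)
  have r: "\<And>w. w \<in> V \<Longrightarrow> 2 \<le> half_pow (gdist V E w w)"
    using hp_refl by (metis order_refl)
  have s: "1 \<le> half_pow (gdist V E u a)" "1 \<le> half_pow (gdist V E a u)"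
    using hp_adj[OF g e] hp_adj[OF g e'] by auto
  have sumV: "\<And>f. (\<Sum>w\<in>V. f w) = f u + f a" using V by simp
  have "lp_feasible V E (\<lambda>_. 1/3)" unfolding lp_feasible_def
  proof (intro conjI ballI)
    fix v assume "v \<in> V"
    hence "v = u \<or> v = a" using V by auto
    moreover have "(\<Sum>w\<in>V. half_pow (gdist V E w v) * (1/3)) = half_pow (gdist V E u v) * (1/3) + half_pow (gdist V E a v) * (1/3)"
      by (rule sumV)
    ultimately show "1 \<le> (\<Sum>w\<in>V. half_pow (gdist V E w v) * (1/3))"
      using r[of u] r[of a] s V by auto
  qed auto
  hence "gamma_ef_star V E \<le> (\<Sum>w\<in>V. 1/3)" by (rule lp_le_sum)
  thus ?thesis using V by simp
qed

lemma small3: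
  assumes g: "graph V E" and V: "V = {u,a,b}" "u \<noteq> a" "u \<noteq> b" "a \<noteq> b" and e: "E u a" "E u b"
  shows "gamma_ef_star V E < 1"
proof -
  have e': "E a u" "E b u" using g e by (auto simp: graph_def)
  have r: "\<And>w. w \<in> V \<Longrightarrow> 2 \<le> half_pow (gdist V E w w)"
    using hp_refl by (metis order_refl)
  have s: "1 \<le> half_pow (gdist V E u a)" "1 \<le> half_pow (gdist V E a u)"
     "1 \<le> half_pow (gdist V E u b)" "1 \<le> half_pow (gdist V E b u)"
    using hp_adj[OF g e(1)] hp_adj[OF g e'(1)] hp_adj[OF g e(2)] hp_adj[OF g e'(2)] by auto
  have "gdist V E a b \<le> enat (length [a,u,b] - 1)"
    using V e e' by (intro gdist_le_walk) (auto simp: walk_def)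
  moreover have "gdist V E b a \<le> enat (length [b,u,a] - 1)"
    using V e e' by (intro gdist_le_walk) (auto simp: walk_def)
  ultimately have "gdist V E a b \<le> enat 2" "gdist V E b a \<le> enat 2" by (simp_all add: numeral_2_eq_2)
  hence t: "1/2 \<le> half_pow (gdist V E a b)" "1/2 \<le> half_pow (gdist V E b a)"
    using hp_ge[of V E a b 2] hp_ge[of V E b a 2] by simp_all
  define x where "x = (\<lambda>w. if w = u then 1/4 else (3/10::real))"
  have xs: "x u = 1/4" "x a = 3/10" "x b = 3/10" using V by (auto simp: x_def)
  have sumV: "\<And>f. (\<Sum>w\<in>V. f w) = f u + f a + f b" using V by (simp add: add.assoc)
  have inV: "u \<in> V" "a \<in> V" "b \<in> V" using V by auto
  have "lp_feasible V E x" unfolding lp_feasible_def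
  proof (intro conjI ballI)
    fix v assume "v \<in> V"
    hence vv: "v = u \<or> v = a \<or> v = b" using V by auto
    have "(\<Sum>w\<in>V. half_pow (gdist V E w v) * x w) = half_pow (gdist V E u v) * x u + half_pow (gdist V E a v) * x a + half_pow (gdist V E b v) * x b"
      by (rule sumV)
    moreover have "1 \<le> half_pow (gdist V E u v) * x u + half_pow (gdist V E a v) * x a + half_pow (gdist V E b v) * x b"
      using vv
    proof (elim disjE)
      assume "v = u" thus ?thesis using r[OF inV(1)] s by (simp add: xs)
    next
      assume "v = a" thus ?thesis using r[OF inV(2)] s t by (simp add: xs)
    next
      assume "v = b" thus ?thesis using r[OF inV(3)] s t by (simp add: xs)
    qed
    ultimately show "1 \<le> (\<Sum>w\<in>V. half_pow (gdist V E w v) * x w)" by simp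
  qed (auto simp: x_def)
  hence "gamma_ef_star V E \<le> (\<Sum>w\<in>V. x w)" by (rule lp_le_sum)
  thus ?thesis using sumV[of x] xs by simp
qed

lemma feasible_one: "finite V \<Longrightarrow> lp_feasible V E (\<lambda>_. 1)"
  unfolding lp_feasible_def
proof (intro conjI ballI)
  fix v assume "finite V" "v \<in> V"
  have "2 \<le> half_pow (gdist V E v v)" using hp_ge[of V E v v 0] gdist_refl[OF \<open>v \<in> V\<close>]
    by (simp add: zero_enat_def)
  also have "\<dots> \<le> (\<Sum>w\<in>V. half_pow (gdist V E w v))"
    using \<open>finite V\<close> \<open>v \<in> V\<close> by (intro member_le_sum) (auto simp: half_pow_nonneg)
  finally show "1 \<le> (\<Sum>w\<in>V. half_pow (gdist V E w v) * 1)" by simp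
qed auto

lemma K13_case:
  assumes g: "graph V E" and V: "V = {c,a1,a2,a3}"
    and d: "c \<noteq> a1" "c \<noteq> a2" "c \<noteq> a3" "a1 \<noteq> a2" "a1 \<noteq> a3" "a2 \<noteq> a3"
    and e: "E c a1" "E c a2" "E c a3"
    and ne: "\<not> E a1 a2" "\<not> E a1 a3" "\<not> E a2 a3"
  shows "real (gamma_e V E) = gamma_ef_star V E"
proof -
  have fin: "finite V" using V by simp
  have e': "E a1 c" "E a2 c" "E a3 c" using g e by (auto simp: graph_def)
  have ne': "\<not> E a2 a1" "\<not> E a3 a1" "\<not> E a3 a2" using g ne by (auto simp: graph_def)
  have dom: "exp_dominating V E {c}" unfolding exp_dominating_def
  proof (intro conjI ballI)
    fix v assume v: "v \<in> V"
    show "1 \<le> exp_weight V E {c} v"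
    proof (cases "v = c")
      case True thus ?thesis using self_weight[of "{c}" V c E] V by simp
    next
      case False
      hence "E v c" "v \<noteq> c" using v V e' by auto
      hence "Ddist V E {c} v c \<le> enat (length [v,c] - 1)"
        using v V by (intro Ddist_path_le) (auto simp: is_path_alt)
      hence "half_pow (enat 1) \<le> half_pow (Ddist V E {c} v c)" by (intro half_pow_anti) simp
      thus ?thesis by (simp add: exp_weight_def half_pow_enat)
    qed
  qed (use V in auto)
  have ge1: "gamma_e V E \<le> 1" unfolding gamma_e_def
    by (rule Least_le) (use dom in force)
  have lp1: "1 \<le> gamma_ef_star V E"
  proof (rule lp_ge[OF _ feasible_one[OF fin]])
    fix x assume x: "lp_feasible V E x"
    have x0: "0 \<le> x c" "0 \<le> x a1" "0 \<le> x a2" "0 \<le> x a3" using x V by (auto simp: lp_feasible_def)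
    have h2: "\<And>w v. half_pow (gdist V E w v) \<le> 2" by (rule half_pow_le2)
    have h1: "\<And>w v. w \<noteq> v \<Longrightarrow> half_pow (gdist V E w v) \<le> 1"
      using hp_le[of 1] gdist_ge1 by (fastforce simp: one_enat_def)
    have hh: "\<And>w v. w \<noteq> v \<Longrightarrow> \<not> E w v \<Longrightarrow> half_pow (gdist V E w v) \<le> 1/2"
      using hp_le[of 2] gdist_ge2 by (fastforce simp: numeral_eq_enat)
    have sumV: "\<And>f. (\<Sum>w\<in>V. f w) = f c + f a1 + f a2 + f a3" using V d by (simp add: add.assoc)
    have C: "\<And>v. v \<in> V \<Longrightarrow> 1 \<le> (\<Sum>w\<in>V. half_pow (gdist V E w v) * x w)" using x by (simp add: lp_feasible_def)
    let ?h = "\<lambda>w v. half_pow (gdist V E w v)"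
    have inV: "a1 \<in> V" "a2 \<in> V" "a3 \<in> V" using V by auto
    have b1: "1 \<le> x c + 2 * x a1 + x a2 / 2 + x a3 / 2"
    proof -
      have "1 \<le> ?h c a1 * x c + ?h a1 a1 * x a1 + ?h a2 a1 * x a2 + ?h a3 a1 * x a3"
        using C[OF inV(1)] sumV[of "\<lambda>w. ?h w a1 * x w"] by simp
      moreover have "?h c a1 * x c \<le> 1 * x c" using h1 d x0 by (intro mult_right_mono) auto
      moreover have "?h a1 a1 * x a1 \<le> 2 * x a1" using h2 x0 by (intro mult_right_mono) auto
      moreover have "?h a2 a1 * x a2 \<le> 1/2 * x a2" using hh d ne' x0 by (intro mult_right_mono) auto
      moreover have "?h a3 a1 * x a3 \<le> 1/2 * x a3" using hh d ne' x0 by (intro mult_right_mono) auto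
      ultimately show ?thesis by simp
    qed
    have b2: "1 \<le> x c + x a1 / 2 + 2 * x a2 + x a3 / 2"
    proof -
      have "1 \<le> ?h c a2 * x c + ?h a1 a2 * x a1 + ?h a2 a2 * x a2 + ?h a3 a2 * x a3"
        using C[OF inV(2)] sumV[of "\<lambda>w. ?h w a2 * x w"] by simp
      moreover have "?h c a2 * x c \<le> 1 * x c" using h1 d x0 by (intro mult_right_mono) auto
      moreover have "?h a1 a2 * x a1 \<le> 1/2 * x a1" using hh d ne x0 by (intro mult_right_mono) auto
      moreover have "?h a2 a2 * x a2 \<le> 2 * x a2" using h2 x0 by (intro mult_right_mono) auto
      moreover have "?h a3 a2 * x a3 \<le> 1/2 * x a3" using hh d ne' x0 by (intro mult_right_mono) auto
      ultimately show ?thesis by simp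
    qed
    have b3: "1 \<le> x c + x a1 / 2 + x a2 / 2 + 2 * x a3"
    proof -
      have "1 \<le> ?h c a3 * x c + ?h a1 a3 * x a1 + ?h a2 a3 * x a2 + ?h a3 a3 * x a3"
        using C[OF inV(3)] sumV[of "\<lambda>w. ?h w a3 * x w"] by simp
      moreover have "?h c a3 * x c \<le> 1 * x c" using h1 d x0 by (intro mult_right_mono) auto
      moreover have "?h a1 a3 * x a1 \<le> 1/2 * x a1" using hh d ne x0 by (intro mult_right_mono) auto
      moreover have "?h a2 a3 * x a2 \<le> 1/2 * x a2" using hh d ne x0 by (intro mult_right_mono) auto
      moreover have "?h a3 a3 * x a3 \<le> 2 * x a3" using h2 x0 by (intro mult_right_mono) auto
      ultimately show ?thesis by simp
    qed
    show "1 \<le> (\<Sum>w\<in>V. x w)" using b1 b2 b3 sumV[of x] by simp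
  qed
  have "gamma_ef_star V E \<le> real (gamma_e V E)" by (rule lp_le_gamma[OF g])
  thus ?thesis using ge1 lp1 by linarith
qed

lemma distinct4:
  "f (h 0) = (0::nat) \<Longrightarrow> f (h 1) = 1 \<Longrightarrow> f (h 2) = 2 \<Longrightarrow> f (h 3) = 3 \<Longrightarrow>
   h 0 \<noteq> h 1 \<and> h 0 \<noteq> h 2 \<and> h 0 \<noteq> h 3 \<and> h 1 \<noteq> h 2 \<and> h 1 \<noteq> h 3 \<and> h (2::nat) \<noteq> h 3"
  by (intro conjI notI; (drule arg_cong[of _ _ f]); simp)

lemma star_iso:
  assumes g: "graph V E" and V: "V = {u,a,b,c}"
    and d: "u \<noteq> a" "u \<noteq> b" "u \<noteq> c" "a \<noteq> b" "a \<noteq> c" "b \<noteq> c"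
    and e: "E u a" "E u b" "E u c" and ne: "\<not> E a b" "\<not> E a c" "\<not> E b c"
  shows "graph_iso V E K13_V K13_E"
proof -
  have e': "E a u" "E b u" "E c u" using g e by (auto simp: graph_def)
  have ne': "\<not> E b a" "\<not> E c a" "\<not> E c b" using g ne by (auto simp: graph_def)
  have irr: "\<not> E u u" "\<not> E a a" "\<not> E b b" "\<not> E c c" using g by (auto simp: graph_def)
  define f where "f w = (if w = u then 0 else if w = a then 1 else if w = b then 2 else (3::nat))" for w
  have fv: "f u = 0" "f a = 1" "f b = 2" "f c = 3" using d by (auto simp: f_def)
  have "inj_on f V" unfolding V inj_on_def using fv d by auto
  moreover have "f ` V = K13_V" unfolding V K13_V_def using fv by auto
  ultimately have "bij_betw f V K13_V" by (simp add: bij_betw_def)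
  moreover have "\<forall>x\<in>V. \<forall>y\<in>V. E x y \<longleftrightarrow> K13_E (f x) (f y)"
    unfolding V using fv e e' ne ne' irr by (simp add: K13_E_def)
  ultimately show ?thesis unfolding graph_iso_def by blast
qed

theorem theorem4:
  fixes V :: "'a set" and E :: "'a \<Rightarrow> 'a \<Rightarrow> bool"
  assumes "tree V E" and "subcubic V E"
  shows "real (gamma_e V E) = gamma_ef_star V E \<longleftrightarrow> graph_iso V E K13_V K13_E"
proof -
  have g: "graph V E" and conn: "connected_graph V E" and acyc: "\<nexists>c. is_cycle V E c"
    using assms(1) by (auto simp: tree_def)
  have fin: "finite V" using g by (simp add: graph_def)
  have Vne: "V \<noteq> {}" using conn by (simp add: connected_graph_def)
  obtain D where D: "exp_dominating V E D" "card D = gamma_e V E" using gamma_e_attained[OF fin] by blast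
  have DV: "D \<subseteq> V" using D(1) by (simp add: exp_dominating_def)
  have finD: "finite D" using finite_subset[OF DV fin] .
  have Dne: "D \<noteq> {}"
  proof
    assume D0: "D = {}"
    obtain v where "v \<in> V" using Vne by blast
    hence "1 \<le> exp_weight V E D v" using D(1) by (simp add: exp_dominating_def)
    thus False using D0 by (simp add: exp_weight_def)
  qed
  show ?thesis
  proof
    assume eq: "real (gamma_e V E) = gamma_ef_star V E"
    show "graph_iso V E K13_V K13_E"
    proof (rule ccontr)
      assume niso: "\<not> graph_iso V E K13_V K13_E"
      show False
      proof (cases "card D \<ge> 2")
        case True
        obtain u where u: "u \<in> D" using Dne by blast
        have "card (D - {u}) \<ge> 1" using True u finD by simp
        hence "D - {u} \<noteq> {}" by (metis card.empty not_one_le_zero)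
        then obtain u' where "u' \<in> D" "u \<noteq> u'" by blast
        from main_case[OF assms(1) D u this] show False using eq by simp
      next
        case False
        moreover have "card D \<noteq> 0" using Dne finD by simp
        ultimately have "card D = 1" by linarith
        then obtain u where Du: "D = {u}" by (auto simp: card_1_singleton_iff)
        have uV: "u \<in> V" using DV Du by auto
        have star: "v = u \<or> E u v" if v: "v \<in> V" for v
        proof (rule ccontr)
          assume nv: "\<not> (v = u \<or> E u v)"
          have "1 \<le> half_pow (Ddist V E {u} v u)" using D(1) v Du by (simp add: exp_dominating_def exp_weight_def)
          moreover obtain k where k: "Ddist V E {u} v u = enat k"
            using calculation by (cases "Ddist V E {u} v u") auto
          ultimately have "1 \<le> 2 / (2::real) ^ k" by (simp add: half_pow_enat)
          hence p2: "(2::real) ^ k \<le> 2" by (simp add: pos_le_divide_eq)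
          have k1: "k \<le> 1"
          proof (rule ccontr)
            assume "\<not> k \<le> 1"
            hence "(2::real) ^ 2 \<le> 2 ^ k" by (intro power_increasing) auto
            thus False using p2 by simp
          qed
          have "gdist V E v u \<le> Ddist V E {u} v u" by (rule Ddist_ge)
          also have "\<dots> \<le> enat 1" using k k1 by simp
          finally have le1: "gdist V E v u \<le> enat 1" .
          have "\<not> E v u" using nv g by (auto simp: graph_def)
          hence "2 \<le> gdist V E v u" using nv by (intro gdist_ge2) auto
          hence "(2::enat) \<le> enat 1" using le1 by (rule order_trans)
          thus False by (simp add: numeral_eq_enat)
        qed
        let ?N = "{v\<in>V. E u v}"
        have cN: "card ?N \<le> 3" using assms(2) uV by (simp add: subcubic_def)
        have VN: "V = insert u ?N" using star uV by auto
        have uN: "u \<notin> ?N" using g by (simp add: graph_def)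
        have noadj: "\<not> E x y" if "x \<in> ?N" "y \<in> ?N" for x y
        proof
          assume xy: "E x y"
          have "x \<noteq> y" using g xy by (auto simp: graph_def)
          have "E y u" using that g by (auto simp: graph_def)
          have "is_cycle V E [u,x,y]" using that xy uN \<open>x \<noteq> y\<close> \<open>E y u\<close> uV
            by (auto simp: is_cycle_def is_path_alt)
          thus False using acyc by blast
        qed
        have lt: "gamma_ef_star V E < 1"
        proof (cases "card ?N = 3")
          case True
          then obtain a b c where abc: "?N = {a,b,c}" "a \<noteq> b" "b \<noteq> c" "a \<noteq> c" by (auto simp: card_3_iff)
          have "E u a" "E u b" "E u c" using abc(1) by blast+
          moreover have "\<not> E a b" "\<not> E a c" "\<not> E b c" using noadj abc(1) by blast+
          moreover have "V = {u,a,b,c}" using VN abc(1) by simp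
          moreover have "u \<noteq> a" "u \<noteq> b" "u \<noteq> c" using uN abc(1) by blast+
          ultimately have "graph_iso V E K13_V K13_E" using star_iso[OF g] abc by blast
          thus ?thesis using niso by blast
        next
          case False
          hence c2: "card ?N = 0 \<or> card ?N = 1 \<or> card ?N = 2" using cN by linarith
          have finN: "finite ?N" using fin by simp
          show ?thesis
          proof (cases "card ?N = 0")
            case True
            hence "?N = {}" using finN by simp
            hence "V = {u}" using VN by metis
            thus ?thesis by (rule small1)
          next
            case False
            show ?thesis
            proof (cases "card ?N = 1")
              case True
              then obtain a where a: "?N = {a}" by (auto simp: card_1_singleton_iff)
              have "E u a" "u \<noteq> a" using a uN by blast+
              moreover have "V = {u,a}" using VN a by simp
              ultimately show ?thesis using small2[OF g] by blast
            next
              case False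
              hence "card ?N = 2" using c2 \<open>card ?N \<noteq> 0\<close> by simp
              then obtain a b where ab: "?N = {a,b}" "a \<noteq> b" by (auto simp: card_2_iff)
              have "E u a" "E u b" "u \<noteq> a" "u \<noteq> b" using ab uN by blast+
              moreover have "V = {u,a,b}" using VN ab by simp
              ultimately show ?thesis using small3[OF g] ab(2) by blast
            qed
          qed
        qed
        thus False using eq D(2) Du by simp
      qed
    qed
  next
    assume iso: "graph_iso V E K13_V K13_E"
    then obtain f where f: "bij_betw f V K13_V" "\<forall>u\<in>V. \<forall>v\<in>V. E u v \<longleftrightarrow> K13_E (f u) (f v)"
      unfolding graph_iso_def by blast
    define h where "h = inv_into V f"
    have hb: "bij_betw h K13_V V" unfolding h_def using f(1) by (rule bij_betw_inv_into)
    have hV: "\<And>y. y \<in> K13_V \<Longrightarrow> h y \<in> V" using hb by (auto simp: bij_betw_def)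
    have fh: "\<And>y. y \<in> K13_V \<Longrightarrow> f (h y) = y" unfolding h_def using f(1)
      by (simp add: bij_betw_def f_inv_into_f)
    have K: "0 \<in> K13_V" "1 \<in> K13_V" "2 \<in> K13_V" "3 \<in> K13_V" by (auto simp: K13_V_def)
    have V: "V = {h 0, h 1, h 2, h 3}" using hb by (auto simp: bij_betw_def K13_V_def)
    have fs: "f (h 0) = 0" "f (h 1) = 1" "f (h 2) = 2" "f (h 3) = 3" using fh K by auto
    have dd: "h 0 \<noteq> h 1" "h 0 \<noteq> h 2" "h 0 \<noteq> h 3" "h 1 \<noteq> h 2" "h 1 \<noteq> h 3" "h 2 \<noteq> h 3"
      using distinct4[of f h, OF fs] by simp_all
    have hV4: "h 0 \<in> V" "h 1 \<in> V" "h 2 \<in> V" "h 3 \<in> V" using hV K by auto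
    have ee: "E (h 0) (h 1)" "E (h 0) (h 2)" "E (h 0) (h 3)"
      using f(2) hV4 fs by (auto simp: K13_E_def)
    have nn: "\<not> E (h 1) (h 2)" "\<not> E (h 1) (h 3)" "\<not> E (h 2) (h 3)"
      using f(2) hV4 fs by (auto simp: K13_E_def)
    show "real (gamma_e V E) = gamma_ef_star V E"
      using K13_case[OF g V dd ee nn] .
  qed
qed

end
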